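(* Let $a,b\in\mathbb{R}[\sin t,\cos t]$ be real trigonometric polynomials with $b$ having only simple zeroes, consider $x'=a(t)|x|+b(t)$, and let $u(t,x)$ denote its solution with $u(0,x)=x$. Let $I\subset(-\infty,0)$ be an open interval such that for every $x\in I$ the function $t\mapsto u(t,x)$ has exactly two zeroes in $(0,2\pi)$, both simple; denote them $t_1(x)<t_2(x)$. Then: \begin{enumerate} \item $t_1,t_2$ are analytic functions on $I$ with analytic inverses. \item For every $x\in I$: $b(t_1(x))>0$, $t_1'(x)<0$, $b(t_2(x))<0$, $t_2'(x)>0$. \item For every $x\in I$, \[ \int_{t_1(x)}^{t_2(x)} b(t)\exp\Big(\int_t^{t_2(x)}a(s)\,ds\Big)dt=0. \] \item For every $x\in I$, $u(t,x)$ is $2\pi$-periodic if and only if \[ \int_{t_2(x)}^{t_1(x)+2\pi} b(t)\exp\Big(\int_t^{t_1(x)+2\pi}-a(s)\,ds\Big)dt=0. \] \end{enumerate}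
   Context: A zero $t_0$ of $t\mapsto u(t,x)$ is simple if $\partial_t u(t_0,x)\neq 0$. *)

theory Defs
  imports "HOL-Analysis.Analysis"
begin

text \<open>Real trigonometric polynomials, i.e. elements of R[sin t, cos t] viewed as functions.\<close>
definition trig_poly :: "(real \<Rightarrow> real) \<Rightarrow> bool" where
  "trig_poly f \<longleftrightarrow> (\<exists>n c d. \<forall>t. f t =
      (\<Sum>k<n. c k * cos (real k * t) + d k * sin (real k * t)))"

definition real_analytic_on :: "(real \<Rightarrow> real) \<Rightarrow> real set \<Rightarrow> bool" where
  "real_analytic_on f S \<longleftrightarrow> (\<forall>x\<in>S. \<exists>r>0. \<exists>c::nat \<Rightarrow> real.
      \<forall>y. \<bar>y - x\<bar> < r \<longrightarrow> (\<lambda>n. c n * (y - x) ^ n) sums f y)"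

end

theory Submission
  imports Defs "HOL-Complex_Analysis.Complex_Analysis" "HOL-Analysis.Analysis"
begin

definition hext :: "(real \<Rightarrow> real) \<Rightarrow> real \<Rightarrow> bool" where
 "hext f x \<longleftrightarrow> (\<exists>h S. open S \<and> complex_of_real x \<in> S \<and> h holomorphic_on S \<and>
     (\<forall>\<^sub>F y in nhds x. h (complex_of_real y) = complex_of_real (f y)))"

lemma hext_analytic:
  assumes "hext f x"
  shows "\<exists>r>0. \<exists>c::nat \<Rightarrow> real. \<forall>y. \<bar>y - x\<bar> < r \<longrightarrow> (\<lambda>n. c n * (y - x) ^ n) sums f y"
proof -
  obtain h S where S: "open S" "complex_of_real x \<in> S" "h holomorphic_on S"
    and ev: "\<forall>\<^sub>F y in nhds x. h (complex_of_real y) = complex_of_real (f y)"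
    using assms unfolding hext_def by blast
  obtain e where e: "e > 0" "\<And>y. dist y x < e \<Longrightarrow> h (complex_of_real y) = complex_of_real (f y)"
    using ev unfolding eventually_nhds_metric by blast
  obtain r where r: "r > 0" "ball (complex_of_real x) r \<subseteq> S"
    using S openE by blast
  define \<rho> where "\<rho> = min e r"
  have hol: "h holomorphic_on ball (complex_of_real x) \<rho>"
    by (rule holomorphic_on_subset[OF S(3)]) (use r(2) in \<open>auto simp: \<rho>_def\<close>)
  define c where "c n = Re ((deriv ^^ n) h (complex_of_real x) / fact n)" for n
  have "(\<lambda>n. c n * (y - x) ^ n) sums f y" if "\<bar>y - x\<bar> < \<rho>" for y
  proof -
    have yin: "complex_of_real y \<in> ball (complex_of_real x) \<rho>"
      using that by (simp add: dist_real_def abs_minus_commute)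
    have "(\<lambda>n. (deriv ^^ n) h (complex_of_real x) / fact n * (complex_of_real y - complex_of_real x) ^ n) sums h (complex_of_real y)"
      by (rule holomorphic_power_series[OF hol yin])
    then have "(\<lambda>n. Re ((deriv ^^ n) h (complex_of_real x) / fact n * (complex_of_real y - complex_of_real x) ^ n)) sums Re (h (complex_of_real y))"
      by (rule conjunct1[OF sums_complex_iff[THEN iffD1]])
    moreover have "h (complex_of_real y) = complex_of_real (f y)"
      using e(2)[of y] that unfolding \<rho>_def by (simp add: dist_real_def)
    moreover have "Re ((deriv ^^ n) h (complex_of_real x) / fact n * (complex_of_real y - complex_of_real x) ^ n) = c n * (y - x) ^ n" for n
    proof -
      have e1: "(complex_of_real y - complex_of_real x) ^ n = complex_of_real ((y - x) ^ n)"
        by simp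
      have e2: "Re (z * complex_of_real r) = Re z * r" for z r by simp
      show ?thesis unfolding c_def e1 by (rule e2)
    qed
    ultimately show ?thesis by simp
  qed
  moreover have "\<rho> > 0" using e r unfolding \<rho>_def by simp
  ultimately show ?thesis by blast
qed

lemma hext_real_analytic_on:
  assumes "\<And>x. x \<in> S \<Longrightarrow> hext f x"
  shows "real_analytic_on f S"
  unfolding real_analytic_on_def
proof (intro ballI)
  fix x assume "x \<in> S"
  show "\<exists>r>0. \<exists>c. \<forall>y. \<bar>y - x\<bar> < r \<longrightarrow> (\<lambda>n. c n * (y - x) ^ n) sums f y"
    by (rule hext_analytic[OF assms[OF \<open>x \<in> S\<close>]])
qed

lemma hol_real_deriv:
  assumes S: "open S" "complex_of_real x \<in> S" "h holomorphic_on S"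
    and ev: "\<forall>\<^sub>F y in nhds x. h (complex_of_real y) = complex_of_real (f y)"
  shows "(f has_real_derivative Re (deriv h (complex_of_real x))) (at x)"
proof -
  have d: "(h has_field_derivative deriv h (complex_of_real x)) (at (complex_of_real x))"
    using holomorphic_derivI[OF S(3) S(1) S(2)] by simp
  have d1: "((\<lambda>y. h (complex_of_real y)) has_derivative (\<lambda>t. deriv h (complex_of_real x) * complex_of_real t)) (at x)"
    using has_derivative_compose[OF bounded_linear.has_derivative[OF bounded_linear_of_real has_derivative_ident] d[unfolded has_field_derivative_def]]
    by simp
  have d2: "((\<lambda>y. Re (h (complex_of_real y))) has_derivative (\<lambda>t. Re (deriv h (complex_of_real x) * complex_of_real t))) (at x)"
    by (rule bounded_linear.has_derivative[OF bounded_linear_Re d1])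
  have d3: "((\<lambda>y. Re (h (complex_of_real y))) has_real_derivative Re (deriv h (complex_of_real x))) (at x)"
  proof -
    have "(\<lambda>t. Re (deriv h (complex_of_real x) * complex_of_real t)) = (*) (Re (deriv h (complex_of_real x)))"
      by (rule ext) simp
    then show ?thesis unfolding has_field_derivative_def using d2 by simp
  qed
  have ev2: "\<forall>\<^sub>F y in nhds x. Re (h (complex_of_real y)) = f y"
    using ev by eventually_elim simp
  show ?thesis by (rule DERIV_cong_ev[OF refl ev2 refl, THEN iffD1, OF d3])
qed

lemma hext_deriv:
  assumes "hext f x" shows "\<exists>D. (f has_real_derivative D) (at x)"
proof -
  obtain h S where S: "open S" "complex_of_real x \<in> S" "h holomorphic_on S"
    and ev: "\<forall>\<^sub>F y in nhds x. h (complex_of_real y) = complex_of_real (f y)"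
    using assms unfolding hext_def by blast
  show ?thesis using hol_real_deriv[OF S ev] by blast
qed

lemma hextE:
  assumes "hext f x"
  obtains h S where "open S" "complex_of_real x \<in> S" "h holomorphic_on S"
    "\<forall>\<^sub>F y in nhds x. h (complex_of_real y) = complex_of_real (f y)"
  using assms unfolding hext_def by blast

lemma hextI:
  assumes "open S" "complex_of_real x \<in> S" "h holomorphic_on S"
    "\<forall>\<^sub>F y in nhds x. h (complex_of_real y) = complex_of_real (f y)"
  shows "hext f x"
  using assms unfolding hext_def by blast

lemma hext_cong:
  assumes "hext f x" "\<forall>\<^sub>F y in nhds x. f y = g y"
  shows "hext g x"
proof -
  obtain h S where S: "open S" "complex_of_real x \<in> S" "h holomorphic_on S"
    and ev: "\<forall>\<^sub>F y in nhds x. h (complex_of_real y) = complex_of_real (f y)"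
    using assms(1) by (rule hextE)
  have "\<forall>\<^sub>F y in nhds x. h (complex_of_real y) = complex_of_real (g y)"
    using ev assms(2) by eventually_elim simp
  then show ?thesis using S by (intro hextI)
qed

lemma cont_ev_dist:
  assumes "isCont f x0" "e > 0"
  shows "\<forall>\<^sub>F x in nhds x0. dist (f x) (f x0) < (e::real)"
proof -
  have "(f \<longlongrightarrow> f x0) (at x0)" using assms(1) by (simp add: isCont_def)
  then have "\<forall>\<^sub>F x in at x0. dist (f x) (f x0) < e" using assms(2) by (rule tendstoD)
  then show ?thesis using assms(2) by (simp add: eventually_nhds_conv_at)
qed

lemma hext_compose:
  assumes G: "hext G (f x0)" and f: "hext f x0" and cont: "isCont f x0"
  shows "hext (\<lambda>x. G (f x)) x0"
proof -
  obtain hG SG where SG: "open SG" "complex_of_real (f x0) \<in> SG" "hG holomorphic_on SG"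
    and evG: "\<forall>\<^sub>F y in nhds (f x0). hG (complex_of_real y) = complex_of_real (G y)"
    using G by (rule hextE)
  obtain hf Sf where Sf: "open Sf" "complex_of_real x0 \<in> Sf" "hf holomorphic_on Sf"
    and evf: "\<forall>\<^sub>F y in nhds x0. hf (complex_of_real y) = complex_of_real (f y)"
    using f by (rule hextE)
  obtain e where e: "e > 0" "\<And>y. dist y (f x0) < e \<Longrightarrow> hG (complex_of_real y) = complex_of_real (G y)"
    using evG unfolding eventually_nhds_metric by blast
  define T where "T = Sf \<inter> hf -` SG"
  have oT: "open T" unfolding T_def
    by (rule continuous_open_preimage[OF holomorphic_on_imp_continuous_on[OF Sf(3)] Sf(1) SG(1)])
  have hx0: "hf (complex_of_real x0) = complex_of_real (f x0)"
    using evf by (rule eventually_nhds_x_imp_x)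
  have x0T: "complex_of_real x0 \<in> T" unfolding T_def using Sf(2) SG(2) hx0 by simp
  have hol: "(\<lambda>z. hG (hf z)) holomorphic_on T"
  proof -
    have "(hG \<circ> hf) holomorphic_on T"
      by (rule holomorphic_on_compose_gen[OF holomorphic_on_subset[OF Sf(3)] SG(3)]) (auto simp: T_def)
    then show ?thesis by (simp add: o_def)
  qed
  have "\<forall>\<^sub>F y in nhds x0. hG (hf (complex_of_real y)) = complex_of_real (G (f y))"
    using evf cont_ev_dist[OF cont e(1)]
  proof eventually_elim
    case (elim y)
    then show ?case using e(2)[of "f y"] by simp
  qed
  then show ?thesis using oT x0T hol by (intro hextI)
qed

lemma hext_id: "hext (\<lambda>x. x) x"
  by (rule hextI[of UNIV _ "\<lambda>z. z"]) auto

lemma hext_uminus: "hext (\<lambda>x. - x) x"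
  by (rule hextI[of UNIV _ "\<lambda>z. - z"]) (auto intro!: holomorphic_intros)

lemma hext_inverse:
  assumes P: "hext \<Phi> s0" and k: "hext k x0" and cont: "isCont f x0" and fx0: "f x0 = s0"
    and dP: "(\<Phi> has_real_derivative D) (at s0)" "D \<noteq> 0"
    and ev: "\<forall>\<^sub>F x in nhds x0. \<Phi> (f x) = k x"
  shows "hext f x0"
proof -
  obtain hP SP where SP: "open SP" "complex_of_real s0 \<in> SP" "hP holomorphic_on SP"
    and evP: "\<forall>\<^sub>F y in nhds s0. hP (complex_of_real y) = complex_of_real (\<Phi> y)"
    using P by (rule hextE)
  obtain hk Sk where Sk: "open Sk" "complex_of_real x0 \<in> Sk" "hk holomorphic_on Sk"
    and evk: "\<forall>\<^sub>F y in nhds x0. hk (complex_of_real y) = complex_of_real (k y)"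
    using k by (rule hextE)
  have "Re (deriv hP (complex_of_real s0)) = D"
    using DERIV_unique[OF hol_real_deriv[OF SP evP] dP(1)] .
  then have dnz: "deriv hP (complex_of_real s0) \<noteq> 0" using dP(2) by auto
  obtain r where r: "r > 0" "ball (complex_of_real s0) r \<subseteq> SP" "inj_on hP (ball (complex_of_real s0) r)"
    using has_complex_derivative_locally_injective[OF SP(3) SP(2) SP(1) dnz] by blast
  define B where "B = ball (complex_of_real s0) r"
  have holB: "hP holomorphic_on B" using SP(3) r(2) unfolding B_def by (rule holomorphic_on_subset)
  have oB: "open B" unfolding B_def by simp
  obtain g where g: "g holomorphic_on (hP ` B)" "\<And>z. z \<in> B \<Longrightarrow> g (hP z) = z"
    using holomorphic_has_inverse[OF holB oB r(3)[folded B_def]] by blast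
  have oPB: "open (hP ` B)"
    by (rule open_mapping_thm3[OF holB oB r(3)[folded B_def]])
  obtain e where e: "e > 0" "\<And>y. dist y s0 < e \<Longrightarrow> hP (complex_of_real y) = complex_of_real (\<Phi> y)"
    using evP unfolding eventually_nhds_metric by blast
  define T where "T = Sk \<inter> hk -` (hP ` B)"
  have oT: "open T" unfolding T_def
    by (rule continuous_open_preimage[OF holomorphic_on_imp_continuous_on[OF Sk(3)] Sk(1) oPB])
  have hk0: "hk (complex_of_real x0) = complex_of_real (k x0)"
    using evk by (rule eventually_nhds_x_imp_x)
  have k0: "\<Phi> (f x0) = k x0" using ev by (rule eventually_nhds_x_imp_x)
  have hP0: "hP (complex_of_real s0) = complex_of_real (\<Phi> s0)"
    using evP by (rule eventually_nhds_x_imp_x)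
  have s0B: "complex_of_real s0 \<in> B" unfolding B_def using r(1) by simp
  have "hk (complex_of_real x0) = hP (complex_of_real s0)"
    using hk0 k0 fx0 hP0 by simp
  then have "hk (complex_of_real x0) \<in> hP ` B" using s0B by blast
  then have x0T: "complex_of_real x0 \<in> T" unfolding T_def using Sk(2) by simp
  have hol: "(\<lambda>z. g (hk z)) holomorphic_on T"
  proof -
    have "(g \<circ> hk) holomorphic_on T"
      by (rule holomorphic_on_compose_gen[OF holomorphic_on_subset[OF Sk(3)] g(1)]) (auto simp: T_def)
    then show ?thesis by (simp add: o_def)
  qed
  have mer: "\<forall>\<^sub>F y in nhds x0. dist (f y) (f x0) < min e r"
    using cont_ev_dist[OF cont, of "min e r"] e(1) r(1) by simp
  have "\<forall>\<^sub>F y in nhds x0. g (hk (complex_of_real y)) = complex_of_real (f y)"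
    using evk ev mer
  proof eventually_elim
    case (elim y)
    have d: "dist (f y) s0 < e" "dist (f y) s0 < r" using elim(3) fx0 by auto
    have "hk (complex_of_real y) = hP (complex_of_real (f y))"
      using elim(1,2) e(2)[OF d(1)] by simp
    moreover have "complex_of_real (f y) \<in> B" unfolding B_def using d(2)
      by (simp add: dist_real_def dist_commute)
    ultimately show ?case using g(2) by simp
  qed
  then show ?thesis using oT x0T hol by (intro hextI)
qed



lemma ReIm_deriv:
  assumes "(P has_field_derivative D) (at (complex_of_real t))"
  shows "((\<lambda>s. Re (P (complex_of_real s))) has_real_derivative Re D) (at t)"
    and "((\<lambda>s. Im (P (complex_of_real s))) has_real_derivative Im D) (at t)"
proof -
  have d1: "((\<lambda>y. P (complex_of_real y)) has_derivative (\<lambda>s. D * complex_of_real s)) (at t)"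
    using has_derivative_compose[OF bounded_linear.has_derivative[OF bounded_linear_of_real has_derivative_ident] assms[unfolded has_field_derivative_def]]
    by simp
  have d2: "((\<lambda>y. Re (P (complex_of_real y))) has_derivative (\<lambda>s. Re (D * complex_of_real s))) (at t)"
    by (rule bounded_linear.has_derivative[OF bounded_linear_Re d1])
  have d3: "((\<lambda>y. Im (P (complex_of_real y))) has_derivative (\<lambda>s. Im (D * complex_of_real s))) (at t)"
    by (rule bounded_linear.has_derivative[OF bounded_linear_Im d1])
  have e2: "(\<lambda>s. Re (D * complex_of_real s)) = (*) (Re D)" by (rule ext) simp
  have e3: "(\<lambda>s. Im (D * complex_of_real s)) = (*) (Im D)" by (rule ext) simp
  show "((\<lambda>s. Re (P (complex_of_real s))) has_real_derivative Re D) (at t)"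
    unfolding has_field_derivative_def using d2 e2 by simp
  show "((\<lambda>s. Im (P (complex_of_real s))) has_real_derivative Im D) (at t)"
    unfolding has_field_derivative_def using d3 e3 by simp
qed

lemma real_primitive:
  assumes hol: "q holomorphic_on UNIV" and real: "\<And>t. q (complex_of_real t) = complex_of_real (Q t)"
  obtains P R where "P holomorphic_on UNIV" "\<And>z. (P has_field_derivative q z) (at z)"
    "\<And>t. P (complex_of_real t) = complex_of_real (R t)" "R 0 = 0"
    "\<And>t. (R has_real_derivative Q t) (at t)"
proof -
  obtain g where g: "\<And>x. (g has_field_derivative q x) (at x)"
    using holomorphic_convex_primitive'[OF convex_UNIV open_UNIV hol] by auto
  define P where "P z = g z - g 0" for z
  have dP: "(P has_field_derivative q z) (at z)" for z
    unfolding P_def using g[of z] by (auto intro!: derivative_eq_intros)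
  have holP: "P holomorphic_on UNIV"
    using dP holomorphic_on_open[of UNIV P] by auto
  define R where "R t = Re (P (complex_of_real t))" for t
  have dI: "((\<lambda>s. Im (P (complex_of_real s))) has_real_derivative 0) (at t)" for t
    using ReIm_deriv(2)[OF dP[of "complex_of_real t"]] real[of t] by simp
  have I0: "Im (P (complex_of_real t)) = 0" for t
    using DERIV_isconst_all[of "\<lambda>s. Im (P (complex_of_real s))" t 0] dI by (simp add: P_def)
  have Pr: "P (complex_of_real t) = complex_of_real (R t)" for t
    using I0[of t] unfolding R_def by (simp add: complex_eq_iff)
  have R0: "R 0 = 0" unfolding R_def P_def by simp
  have dR: "(R has_real_derivative Q t) (at t)" for t
    using ReIm_deriv(1)[OF dP[of "complex_of_real t"]] real[of t] unfolding R_def by simp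
  show ?thesis using that holP dP Pr R0 dR by blast
qed

lemma cos_nat_period: "cos (x + real k * (2 * pi)) = cos x"
proof (induction k)
  case (Suc k)
  have "x + real (Suc k) * (2 * pi) = (x + real k * (2 * pi)) + 2 * pi" by (simp add: algebra_simps)
  then show ?case by (simp only: cos_periodic Suc.IH)
qed simp

lemma sin_nat_period: "sin (x + real k * (2 * pi)) = sin x"
proof (induction k)
  case (Suc k)
  have "x + real (Suc k) * (2 * pi) = (x + real k * (2 * pi)) + 2 * pi" by (simp add: algebra_simps)
  then show ?case by (simp only: sin_periodic Suc.IH)
qed simp

lemma trig_ext:
  assumes "trig_poly a"
  obtains ac where "ac holomorphic_on UNIV" "\<And>t. ac (complex_of_real t) = complex_of_real (a t)"
    "\<And>t. a (t + 2 * pi) = a t" "\<exists>M. \<forall>t. \<bar>a t\<bar> \<le> M"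
proof -
  obtain n c d where a: "\<And>t. a t = (\<Sum>k<n. c k * cos (real k * t) + d k * sin (real k * t))"
    using assms unfolding trig_poly_def by blast
  define ac where "ac z = (\<Sum>k<n. complex_of_real (c k) * cos (of_nat k * z) + complex_of_real (d k) * sin (of_nat k * z))" for z
  have hol: "ac holomorphic_on UNIV" unfolding ac_def by (intro holomorphic_intros)
  have re: "ac (complex_of_real t) = complex_of_real (a t)" for t
  proof -
    have e: "(of_nat k * complex_of_real t) = complex_of_real (real k * t)" for k by simp
    show ?thesis unfolding ac_def a e cos_of_real sin_of_real by simp
  qed
  have per: "a (t + 2 * pi) = a t" for t
  proof -
    have "real k * (t + 2 * pi) = real k * t + real k * (2 * pi)" for k by (simp add: algebra_simps)
    then show ?thesis unfolding a by (simp add: cos_nat_period sin_nat_period)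
  qed
  have bd: "\<bar>a t\<bar> \<le> (\<Sum>k<n. \<bar>c k\<bar> + \<bar>d k\<bar>)" for t
  proof -
    have "\<bar>a t\<bar> \<le> (\<Sum>k<n. \<bar>c k * cos (real k * t) + d k * sin (real k * t)\<bar>)"
      unfolding a by (rule sum_abs)
    also have "\<dots> \<le> (\<Sum>k<n. \<bar>c k\<bar> + \<bar>d k\<bar>)"
    proof (rule sum_mono)
      fix k
      have "\<bar>c k * cos (real k * t)\<bar> \<le> \<bar>c k\<bar>"
        by (simp add: abs_mult mult_left_le)
      moreover have "\<bar>d k * sin (real k * t)\<bar> \<le> \<bar>d k\<bar>"
        by (simp add: abs_mult mult_left_le)
      ultimately show "\<bar>c k * cos (real k * t) + d k * sin (real k * t)\<bar> \<le> \<bar>c k\<bar> + \<bar>d k\<bar>"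
        by (meson abs_triangle_ineq add_mono order_trans)
    qed
    finally show ?thesis .
  qed
  show ?thesis using that hol re per bd by blast
qed

lemma trig_cont:
  assumes "trig_poly a" shows "isCont a t"
proof -
  obtain n c d where a: "\<And>t. a t = (\<Sum>k<n. c k * cos (real k * t) + d k * sin (real k * t))"
    using assms unfolding trig_poly_def by blast
  have "a = (\<lambda>t. \<Sum>k<n. c k * cos (real k * t) + d k * sin (real k * t))" using a by (rule ext)
  moreover have "isCont (\<lambda>t. \<Sum>k<n. c k * cos (real k * t) + d k * sin (real k * t)) t"
    by (intro continuous_intros)
  ultimately show ?thesis by simp
qed

lemma sign_connected:
  fixes U :: "real \<Rightarrow> real"
  assumes "connected S" "continuous_on S U" "\<And>t. t \<in> S \<Longrightarrow> U t \<noteq> 0" "s \<in> S" "U s > 0" "t \<in> S"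
  shows "U t > 0"
proof (rule ccontr)
  assume "\<not> U t > 0"
  then have "U t \<le> 0" by simp
  have c: "connected (U ` S)" by (rule connected_continuous_image[OF assms(2) assms(1)])
  have "U t \<in> U ` S" "U s \<in> U ` S" using assms(4,6) by auto
  then have "0 \<in> U ` S"
    using connected_contains_Icc[OF c] \<open>U t \<le> 0\<close> assms(5) by (meson atLeastAtMost_iff less_le_not_le subsetD)
  then show False using assms(3) by auto
qed

lemma sign_connected_neg:
  fixes U :: "real \<Rightarrow> real"
  assumes "connected S" "continuous_on S U" "\<And>t. t \<in> S \<Longrightarrow> U t \<noteq> 0" "s \<in> S" "U s < 0" "t \<in> S"
  shows "U t < 0"
proof -
  have "- U t > 0"
    by (rule sign_connected[of S "\<lambda>t. - U t" s]) (use assms in \<open>auto intro: continuous_intros\<close>)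
  then show ?thesis by simp
qed

lemma deriv_ev_eq:
  assumes "(f has_real_derivative D1) (at x)" "(g has_real_derivative D2) (at x)"
    "\<forall>\<^sub>F y in nhds x. f y = g y"
  shows "D1 = D2"
proof -
  have "(g has_real_derivative D1) (at x)"
    by (rule DERIV_cong_ev[OF refl assms(3) refl, THEN iffD1, OF assms(1)])
  then show ?thesis using assms(2) by (rule DERIV_unique)
qed

lemma inv_hext:
  fixes f :: "real \<Rightarrow> real"
  assumes oI: "open I" and inj: "inj_on f I" and hx: "\<And>x. x \<in> I \<Longrightarrow> hext f x"
    and dx: "\<And>x. x \<in> I \<Longrightarrow> \<exists>D. (f has_real_derivative D) (at x) \<and> D \<noteq> 0"
    and y: "y \<in> f ` I"
  shows "hext (inv_into I f) y"
proof -
  have cf: "continuous_on I f"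
    using dx by (intro continuous_at_imp_continuous_on) (metis DERIV_isCont)
  have of: "open (f ` I)" by (rule invariance_of_domain[OF cf oI inj])
  have cg: "continuous_on (f ` I) (inv_into I f)"
    by (rule continuous_on_inverse_open[OF oI cf]) (use inj in auto)
  obtain x0 where x0: "x0 \<in> I" "y = f x0" using y by blast
  have gy: "inv_into I f y = x0" using x0 inj by simp
  obtain D where D: "(f has_real_derivative D) (at x0)" "D \<noteq> 0" using dx[OF x0(1)] by blast
  have ic: "isCont (inv_into I f) y"
    using cg of y continuous_on_eq_continuous_at by blast
  have ev: "\<forall>\<^sub>F z in nhds y. f (inv_into I f z) = z"
  proof -
    have "\<forall>\<^sub>F z in nhds y. z \<in> f ` I" by (rule eventually_nhds_in_open[OF of y])
    then show ?thesis by eventually_elim (simp add: f_inv_into_f)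
  qed
  show ?thesis
    by (rule hext_inverse[OF hx[OF x0(1)] hext_id ic gy D ev])
qed



lemma const_from_deriv:
  fixes \<Phi> :: "real \<Rightarrow> real"
  assumes "p < q" "\<And>s. (\<Phi> has_real_derivative \<Phi>' s) (at s)" "\<And>s. p < s \<Longrightarrow> s < q \<Longrightarrow> \<Phi>' s = 0"
    "t \<in> {p..q}"
  shows "\<Phi> t = \<Phi> p"
proof -
  have c: "continuous_on {p..q} \<Phi>"
    using assms(2) by (intro continuous_at_imp_continuous_on) (metis DERIV_isCont)
  show ?thesis
  proof (rule DERIV_isconst2[OF assms(1) c])
    fix s assume "p < s" "s < q"
    then show "(\<Phi> has_real_derivative 0) (at s)" using assms(2)[of s] assms(3)[of s] by simp
  qed (use assms(4) in auto)
qed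

lemma isCont_delta:
  fixes f :: "real \<Rightarrow> real"
  assumes "isCont f x0" "e > 0"
  shows "\<exists>d>0. \<forall>x. \<bar>x - x0\<bar> < d \<longrightarrow> \<bar>f x - f x0\<bar> < e"
proof -
  have "f \<midarrow>x0\<rightarrow> f x0" using assms(1) by (simp add: isCont_def)
  then obtain d where d: "d > 0" "\<And>x. x \<noteq> x0 \<Longrightarrow> norm (x - x0) < d \<Longrightarrow> norm (f x - f x0) < e"
    using assms(2) unfolding LIM_eq by blast
  have "\<bar>f x - f x0\<bar> < e" if "\<bar>x - x0\<bar> < d" for x
    using d(2)[of x] that assms(2) by (cases "x = x0") auto
  then show ?thesis using d(1) by blast
qed

lemma isCont_by_delta:
  fixes f :: "real \<Rightarrow> real"
  assumes "\<And>e. e > 0 \<Longrightarrow> \<exists>d>0. \<forall>x. \<bar>x - x0\<bar> < d \<longrightarrow> \<bar>f x - f x0\<bar> < e"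
  shows "isCont f x0"
  unfolding isCont_def LIM_eq using assms by fastforce

lemma open_delta:
  fixes I :: "real set"
  assumes "open I" "x0 \<in> I"
  shows "\<exists>d>0. \<forall>x. \<bar>x - x0\<bar> < d \<longrightarrow> x \<in> I"
proof -
  obtain d where d: "d > 0" "ball x0 d \<subseteq> I" using openE[OF assms] by blast
  have "x \<in> I" if "\<bar>x - x0\<bar> < d" for x
  proof -
    have "x \<in> ball x0 d" using that by (simp add: dist_real_def abs_minus_commute)
    then show ?thesis using d(2) by blast
  qed
  then show ?thesis using d(1) by blast
qed

locale setting =
  fixes a b :: "real \<Rightarrow> real" and u :: "real \<Rightarrow> real \<Rightarrow> real" and I :: "real set"
    and t1 t2 :: "real \<Rightarrow> real" and A F G :: "real \<Rightarrow> real" and M :: real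
  assumes u_ode: "\<And>t x. ((\<lambda>s. u s x) has_real_derivative (a t * \<bar>u t x\<bar> + b t)) (at t)"
    and u_init: "\<And>x. u 0 x = x"
    and I_open: "open I" and I_interval: "is_interval I"
    and I_neg: "I \<subseteq> {..<0}"
    and zeros: "\<And>x. x \<in> I \<Longrightarrow> 0 < t1 x \<and> t1 x < t2 x \<and> t2 x < 2 * pi \<and>
                 {t \<in> {0<..<2 * pi}. u t x = 0} = {t1 x, t2 x}"
    and simple: "\<And>x t. x \<in> I \<Longrightarrow> t \<in> {0<..<2 * pi} \<Longrightarrow> u t x = 0 \<Longrightarrow>
                 deriv (\<lambda>s. u s x) t \<noteq> 0"
    and a_cont: "\<And>t. isCont a t" and b_cont: "\<And>t. isCont b t"
    and a_per: "\<And>t. a (t + 2 * pi) = a t" and b_per: "\<And>t. b (t + 2 * pi) = b t"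
    and a_bd: "\<And>t. \<bar>a t\<bar> \<le> M"
    and A_der: "\<And>t. (A has_real_derivative a t) (at t)" and A0: "A 0 = 0"
    and F_der: "\<And>t. (F has_real_derivative exp (A t) * b t) (at t)" and F0: "F 0 = 0"
    and G_der: "\<And>t. (G has_real_derivative exp (- A t) * b t) (at t)"
    and F_hext: "\<And>t. hext F t" and G_hext: "\<And>t. hext G t"
begin

lemma z:
  assumes "x \<in> I"
  shows "0 < t1 x" "t1 x < t2 x" "t2 x < 2 * pi" "u (t1 x) x = 0" "u (t2 x) x = 0"
    "\<And>t. 0 < t \<Longrightarrow> t < 2 * pi \<Longrightarrow> u t x = 0 \<Longrightarrow> t = t1 x \<or> t = t2 x"
proof -
  have Z: "0 < t1 x" "t1 x < t2 x" "t2 x < 2 * pi" and E: "{t \<in> {0<..<2 * pi}. u t x = 0} = {t1 x, t2 x}"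
    using zeros[OF assms] by auto
  show "0 < t1 x" "t1 x < t2 x" "t2 x < 2 * pi" by (fact Z)+
  have "t1 x \<in> {t \<in> {0<..<2 * pi}. u t x = 0}" "t2 x \<in> {t \<in> {0<..<2 * pi}. u t x = 0}"
    unfolding E by auto
  then show "u (t1 x) x = 0" "u (t2 x) x = 0" by auto
  fix t assume "0 < t" "t < 2 * pi" "u t x = 0"
  then have "t \<in> {t \<in> {0<..<2 * pi}. u t x = 0}" by auto
  then show "t = t1 x \<or> t = t2 x" unfolding E by auto
qed

lemma xneg: "x \<in> I \<Longrightarrow> x < 0" using I_neg by auto

lemma Ucont: "continuous_on S (\<lambda>s. u s x)"
  by (intro continuous_at_imp_continuous_on ballI) (metis DERIV_isCont u_ode)

lemma Uderiv0: "u t x = 0 \<Longrightarrow> ((\<lambda>s. u s x) has_real_derivative b t) (at t)"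
  using u_ode[of x t] by simp

lemma b_nz: assumes "x \<in> I" "0 < t" "t < 2 * pi" "u t x = 0" shows "b t \<noteq> 0"
proof -
  have "deriv (\<lambda>s. u s x) t = b t" using DERIV_imp_deriv[OF Uderiv0[OF assms(4)]] .
  then show ?thesis using simple[of x t] assms by auto
qed

lemma neg1: assumes "x \<in> I" "t \<in> {0..<t1 x}" shows "u t x < 0"
proof (rule sign_connected_neg[of "{0..<t1 x}" "\<lambda>s. u s x" 0 t])
  show "connected {0..<t1 x}" by simp
  show "continuous_on {0..<t1 x} (\<lambda>s. u s x)" by (rule Ucont)
  show "0 \<in> {0..<t1 x}" using z[OF assms(1)] by simp
  show "u 0 x < 0" using u_init xneg[OF assms(1)] by simp
  show "t \<in> {0..<t1 x}" by (fact assms(2))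
  fix s assume s: "s \<in> {0..<t1 x}"
  show "u s x \<noteq> 0"
  proof
    assume u0: "u s x = 0"
    have "s \<noteq> 0" using u0 u_init xneg[OF assms(1)] by auto
    then have "0 < s" "s < 2 * pi" using s z[OF assms(1)] by auto
    then have "s = t1 x \<or> s = t2 x" using z(6)[OF assms(1) _ _ u0] by auto
    then show False using s z[OF assms(1)] by auto
  qed
qed

lemma b1pos: assumes "x \<in> I" shows "b (t1 x) > 0"
proof -
  have Z: "0 < t1 x" "t1 x < t2 x" "t2 x < 2 * pi" "u (t1 x) x = 0" using z[OF assms] by auto
  have nz: "b (t1 x) \<noteq> 0" using b_nz[OF assms] Z by auto
  have "\<not> b (t1 x) < 0"
  proof
    assume "b (t1 x) < 0"
    then obtain d where d: "d > 0" "\<And>h. h > 0 \<Longrightarrow> h < d \<Longrightarrow> u (t1 x) x < u (t1 x - h) x"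
      using DERIV_neg_dec_left[OF Uderiv0[OF Z(4)]] by blast
    define h where "h = min (d/2) (t1 x / 2)"
    have hle: "h \<le> d/2" "h \<le> t1 x / 2" unfolding h_def by (rule min.cobounded1, rule min.cobounded2)
    have "h > 0" "h < d" using d Z unfolding h_def by auto
    then have "u (t1 x - h) x > 0" using d(2) Z(4) by auto
    moreover have "t1 x - h \<in> {0..<t1 x}" using hle \<open>h > 0\<close> Z by simp
    then have "u (t1 x - h) x < 0" using neg1[OF assms, of "t1 x - h"] by auto
    ultimately show False by simp
  qed
  then show ?thesis using nz by simp
qed

lemma pos12: assumes "x \<in> I" "t \<in> {t1 x<..<t2 x}" shows "u t x > 0"
proof -
  have Z: "0 < t1 x" "t1 x < t2 x" "t2 x < 2 * pi" "u (t1 x) x = 0" using z[OF assms(1)] by auto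
  obtain d where d: "d > 0" "\<And>h. h > 0 \<Longrightarrow> h < d \<Longrightarrow> u (t1 x) x < u (t1 x + h) x"
    using DERIV_pos_inc_right[OF Uderiv0[OF Z(4)] b1pos[OF assms(1)]] by blast
  define h where "h = min (d/2) ((t2 x - t1 x) / 2)"
  have hle: "h \<le> d/2" "h \<le> (t2 x - t1 x) / 2" unfolding h_def by (rule min.cobounded1, rule min.cobounded2)
  have h: "h > 0" "h < d" using d Z unfolding h_def by auto
  show ?thesis
  proof (rule sign_connected[of "{t1 x<..<t2 x}" "\<lambda>s. u s x" "t1 x + h" t])
    show "connected {t1 x<..<t2 x}" by simp
    show "continuous_on {t1 x<..<t2 x} (\<lambda>s. u s x)" by (rule Ucont)
    show "t1 x + h \<in> {t1 x<..<t2 x}" using h Z hle by simp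
    show "u (t1 x + h) x > 0" using d(2)[OF h] Z by simp
    show "t \<in> {t1 x<..<t2 x}" by (fact assms(2))
    fix s assume s: "s \<in> {t1 x<..<t2 x}"
    show "u s x \<noteq> 0"
    proof
      assume u0: "u s x = 0"
      have "0 < s" "s < 2 * pi" using s Z by auto
      then have "s = t1 x \<or> s = t2 x" using z(6)[OF assms(1) _ _ u0] by auto
      then show False using s by auto
    qed
  qed
qed

lemma b2neg: assumes "x \<in> I" shows "b (t2 x) < 0"
proof -
  have Z: "0 < t1 x" "t1 x < t2 x" "t2 x < 2 * pi" "u (t2 x) x = 0" using z[OF assms] by auto
  have nz: "b (t2 x) \<noteq> 0" using b_nz[OF assms] Z by auto
  have "\<not> b (t2 x) > 0"
  proof
    assume "b (t2 x) > 0"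
    then obtain d where d: "d > 0" "\<And>h. h > 0 \<Longrightarrow> h < d \<Longrightarrow> u (t2 x - h) x < u (t2 x) x"
      using DERIV_pos_inc_left[OF Uderiv0[OF Z(4)]] by blast
    define h where "h = min (d/2) ((t2 x - t1 x) / 2)"
    have hle: "h \<le> d/2" "h \<le> (t2 x - t1 x) / 2" unfolding h_def by (rule min.cobounded1, rule min.cobounded2)
    have "h > 0" "h < d" using d Z unfolding h_def by auto
    then have "u (t2 x - h) x < 0" using d(2) Z(4) by auto
    moreover have "h < t2 x - t1 x" using Z \<open>h > 0\<close> hle by (simp add: field_simps)
    then have "u (t2 x - h) x > 0" using pos12[OF assms, of "t2 x - h"] \<open>h > 0\<close> by auto
    ultimately show False by simp
  qed
  then show ?thesis using nz by simp
qed

lemma neg2: assumes "x \<in> I" "t \<in> {t2 x<..<2 * pi}" shows "u t x < 0"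
proof -
  have Z: "0 < t1 x" "t1 x < t2 x" "t2 x < 2 * pi" "u (t2 x) x = 0" using z[OF assms(1)] by auto
  obtain d where d: "d > 0" "\<And>h. h > 0 \<Longrightarrow> h < d \<Longrightarrow> u (t2 x) x > u (t2 x + h) x"
    using DERIV_neg_dec_right[OF Uderiv0[OF Z(4)] b2neg[OF assms(1)]] by blast
  define h where "h = min (d/2) ((2 * pi - t2 x) / 2)"
  have hle: "h \<le> d/2" "h \<le> (2 * pi - t2 x) / 2" unfolding h_def by (rule min.cobounded1, rule min.cobounded2)
  have h: "h > 0" "h < d" using d Z unfolding h_def by auto
  show ?thesis
  proof (rule sign_connected_neg[of "{t2 x<..<2 * pi}" "\<lambda>s. u s x" "t2 x + h" t])
    show "connected {t2 x<..<2 * pi}" by simp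
    show "continuous_on {t2 x<..<2 * pi} (\<lambda>s. u s x)" by (rule Ucont)
    show "t2 x + h \<in> {t2 x<..<2 * pi}" using h Z hle by simp
    show "u (t2 x + h) x < 0" using d(2)[OF h] Z by simp
    show "t \<in> {t2 x<..<2 * pi}" by (fact assms(2))
    fix s assume s: "s \<in> {t2 x<..<2 * pi}"
    show "u s x \<noteq> 0"
    proof
      assume u0: "u s x = 0"
      have "0 < s" "s < 2 * pi" using s Z by auto
      then have "s = t1 x \<or> s = t2 x" using z(6)[OF assms(1) _ _ u0] by auto
      then show False using s Z by auto
    qed
  qed
qed

lemma U2pi: assumes "x \<in> I" shows "u (2 * pi) x \<le> 0"
proof (rule ccontr)
  assume "\<not> u (2 * pi) x \<le> 0"
  then have p: "u (2 * pi) x > 0" by simp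
  have Z: "t2 x < 2 * pi" using z[OF assms] by auto
  define s where "s = (t2 x + 2 * pi) / 2"
  have sn: "u s x < 0" using neg2[OF assms, of s] Z unfolding s_def by auto
  obtain c where c: "c \<ge> s" "c \<le> 2 * pi" "u c x = 0"
  proof -
    have ic: "\<forall>t. s \<le> t \<and> t \<le> 2 * pi \<longrightarrow> isCont (\<lambda>t. u t x) t"
      using DERIV_isCont[OF u_ode] by blast
    have "s \<le> 2 * pi" using Z unfolding s_def by simp
    then show ?thesis using IVT[of "\<lambda>t. u t x" s 0 "2 * pi", OF _ _ _ ic] sn p that by force
  qed
  have "c \<noteq> 2 * pi" using c p by auto
  then have "c \<in> {t2 x<..<2 * pi}" using c Z unfolding s_def by auto
  then show False using neg2[OF assms] c by fastforce
qed

lemma id1: assumes "x \<in> I" "t \<in> {0..t1 x}" shows "exp (A t) * u t x = x + F t"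
proof -
  have d: "((\<lambda>s. exp (A s) * u s x - F s) has_real_derivative
      exp (A s) * a s * u s x + (a s * \<bar>u s x\<bar> + b s) * exp (A s) - exp (A s) * b s) (at s)" for s
    by (rule DERIV_diff[OF DERIV_mult[OF DERIV_fun_exp[OF A_der] u_ode] F_der])
  have "exp (A t) * u t x - F t = exp (A 0) * u 0 x - F 0"
  proof (rule const_from_deriv[where \<Phi>="\<lambda>s. exp (A s) * u s x - F s", OF _ d])
    show "0 < t1 x" using z[OF assms(1)] by simp
    fix s assume "0 < s" "s < t1 x"
    then have "u s x < 0" using neg1[OF assms(1), of s] by simp
    then show "exp (A s) * a s * u s x + (a s * \<bar>u s x\<bar> + b s) * exp (A s) - exp (A s) * b s = 0"
      by (simp add: algebra_simps)
  qed (use assms(2) in auto)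
  then show ?thesis using A0 F0 u_init by simp
qed

lemma id2: assumes "x \<in> I" "t \<in> {t1 x..t2 x}" shows "exp (- A t) * u t x = G t - G (t1 x)"
proof -
  have d: "((\<lambda>s. exp (- A s) * u s x - G s) has_real_derivative
      exp (- A s) * (- a s) * u s x + (a s * \<bar>u s x\<bar> + b s) * exp (- A s) - exp (- A s) * b s) (at s)" for s
    by (rule DERIV_diff[OF DERIV_mult[OF DERIV_fun_exp[OF DERIV_minus[OF A_der]] u_ode] G_der])
  have "exp (- A t) * u t x - G t = exp (- A (t1 x)) * u (t1 x) x - G (t1 x)"
  proof (rule const_from_deriv[where \<Phi>="\<lambda>s. exp (- A s) * u s x - G s", OF _ d])
    show "t1 x < t2 x" using z[OF assms(1)] by simp
    fix s assume "t1 x < s" "s < t2 x"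
    then have "u s x > 0" using pos12[OF assms(1), of s] by simp
    then show "exp (- A s) * (- a s) * u s x + (a s * \<bar>u s x\<bar> + b s) * exp (- A s) - exp (- A s) * b s = 0"
      by (simp add: algebra_simps)
  qed (use assms(2) in auto)
  then show ?thesis using z[OF assms(1)] by simp
qed

lemma id3: assumes "x \<in> I" "t \<in> {t2 x..2 * pi}" shows "exp (A t) * u t x - F t = - F (t2 x)"
proof -
  have d: "((\<lambda>s. exp (A s) * u s x - F s) has_real_derivative
      exp (A s) * a s * u s x + (a s * \<bar>u s x\<bar> + b s) * exp (A s) - exp (A s) * b s) (at s)" for s
    by (rule DERIV_diff[OF DERIV_mult[OF DERIV_fun_exp[OF A_der] u_ode] F_der])
  have "exp (A t) * u t x - F t = exp (A (t2 x)) * u (t2 x) x - F (t2 x)"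
  proof (rule const_from_deriv[where \<Phi>="\<lambda>s. exp (A s) * u s x - F s", OF _ d])
    show "t2 x < 2 * pi" using z[OF assms(1)] by simp
    fix s assume "t2 x < s" "s < 2 * pi"
    then have "u s x < 0" using neg2[OF assms(1), of s] by simp
    then show "exp (A s) * a s * u s x + (a s * \<bar>u s x\<bar> + b s) * exp (A s) - exp (A s) * b s = 0"
      by (simp add: algebra_simps)
  qed (use assms(2) in auto)
  then show ?thesis using z[OF assms(1)] by simp
qed

lemma F_t1: "x \<in> I \<Longrightarrow> F (t1 x) = - x"
  using id1[of x "t1 x"] z[of x] by simp

lemma Fneg: assumes "x \<in> I" "t \<in> {0..<t1 x}" shows "x + F t < 0"
proof -
  have "exp (A t) * u t x < 0" using neg1[OF assms] by (simp add: mult_pos_neg)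
  then show ?thesis using id1[OF assms(1), of t] assms(2) by simp
qed

lemma G_eq: "x \<in> I \<Longrightarrow> G (t2 x) = G (t1 x)"
  using id2[of x "t2 x"] z[of x] by simp

lemma Gpos: assumes "x \<in> I" "t \<in> {t1 x<..<t2 x}" shows "G t > G (t1 x)"
proof -
  have "exp (- A t) * u t x > 0" using pos12[OF assms] by simp
  then show ?thesis using id2[OF assms(1), of t] assms(2) by simp
qed

lemma F_2pi: "x \<in> I \<Longrightarrow> exp (A (2 * pi)) * u (2 * pi) x - F (2 * pi) = - F (t2 x)"
  using id3[of x "2 * pi"] z[of x] by simp

lemma t1_cont: assumes x0: "x0 \<in> I" shows "isCont t1 x0"
proof (rule isCont_by_delta)
  fix e :: real assume e: "e > 0"
  define s0 where "s0 = t1 x0"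
  have s0: "0 < s0" "F s0 = - x0" using z[OF x0] F_t1[OF x0] unfolding s0_def by auto
  obtain d0 where d0: "d0 > 0" "\<And>x. \<bar>x - x0\<bar> < d0 \<Longrightarrow> x \<in> I" using open_delta[OF I_open x0] by blast
  have Fd: "exp (A s0) * b s0 > 0" using b1pos[OF x0] unfolding s0_def by simp
  obtain d where d: "d > 0" "\<And>h. h > 0 \<Longrightarrow> h < d \<Longrightarrow> F s0 < F (s0 + h)"
    using DERIV_pos_inc_right[OF F_der Fd] by blast
  define p where "p = s0 + min (d/2) (e/2)"
  have p: "p > s0" "p < s0 + e" "F s0 < F p"
    using d e unfolding p_def by (auto intro!: d(2))
  define \<eta> where "\<eta> = x0 + F p"
  have \<eta>: "\<eta> > 0" using p s0 unfolding \<eta>_def by simp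
  define q where "q = s0 - min (e/2) (s0/2)"
  have q: "0 \<le> q" "q < s0" "s0 - e < q"
    using e s0 unfolding q_def by (auto simp: min_def)
  have cF: "continuous_on {0..q} (\<lambda>t. x0 + F t)"
    using F_der by (intro continuous_at_imp_continuous_on continuous_intros ballI) (metis DERIV_isCont)
  obtain tm where tm: "tm \<in> {0..q}" "\<And>t. t \<in> {0..q} \<Longrightarrow> x0 + F t \<le> x0 + F tm"
    using continuous_attains_sup[OF compact_Icc _ cF] q(1) by auto
  define M0 where "M0 = x0 + F tm"
  have M0: "M0 < 0" unfolding M0_def using Fneg[OF x0, of tm] tm(1) q unfolding s0_def by auto
  define \<delta> where "\<delta> = min d0 (min \<eta> (- M0))"
  have "\<delta> > 0" using d0 \<eta> M0 unfolding \<delta>_def by auto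
  moreover have "\<bar>t1 x - t1 x0\<bar> < e" if xd: "\<bar>x - x0\<bar> < \<delta>" for x
  proof -
    have xI: "x \<in> I" using d0(2) xd unfolding \<delta>_def by auto
    have xe: "\<bar>x - x0\<bar> < \<eta>" "\<bar>x - x0\<bar> < - M0" using xd unfolding \<delta>_def by auto
    have up: "t1 x < p"
    proof (rule ccontr)
      assume "\<not> t1 x < p"
      then have "p < t1 x \<or> p = t1 x" by auto
      then have "x + F p \<le> 0"
      proof
        assume "p < t1 x" then show ?thesis using Fneg[OF xI, of p] p s0 by auto
      next
        assume "p = t1 x" then show ?thesis using F_t1[OF xI] by simp
      qed
      then show False using xe(1) unfolding \<eta>_def by simp
    qed
    have lo: "q < t1 x"
    proof (rule ccontr)
      assume "\<not> q < t1 x"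
      then have "t1 x \<in> {0..q}" using z[OF xI] by auto
      then have "x0 + F (t1 x) \<le> M0" using tm(2) unfolding M0_def by blast
      then show False using F_t1[OF xI] xe(2) by simp
    qed
    show ?thesis using up lo p q unfolding s0_def by auto
  qed
  ultimately show "\<exists>d>0. \<forall>x. \<bar>x - x0\<bar> < d \<longrightarrow> \<bar>t1 x - t1 x0\<bar> < e" by blast
qed

lemma G_incr:
  assumes "\<And>t. lo \<le> t \<Longrightarrow> t \<le> hi \<Longrightarrow> b t > 0" "lo \<le> v" "v < w" "w \<le> hi"
  shows "G v < G w"
proof (rule DERIV_pos_imp_increasing[OF assms(3)])
  fix t assume "v \<le> t" "t \<le> w"
  then have "exp (- A t) * b t > 0" using assms by simp
  then show "\<exists>y. (G has_real_derivative y) (at t) \<and> y > 0" using G_der by blast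
qed

lemma t2_cont: assumes x0: "x0 \<in> I" shows "isCont t2 x0"
proof (rule isCont_by_delta)
  fix e :: real assume e: "e > 0"
  define s0 where "s0 = t1 x0"
  define r0 where "r0 = t2 x0"
  have sr: "0 < s0" "s0 < r0" "r0 < 2 * pi" "G r0 = G s0"
    using z[OF x0] G_eq[OF x0] unfolding s0_def r0_def by auto
  obtain d0 where d0: "d0 > 0" "\<And>x. \<bar>x - x0\<bar> < d0 \<Longrightarrow> x \<in> I" using open_delta[OF I_open x0] by blast
  have Gd: "exp (- A r0) * b r0 < 0" using b2neg[OF x0] unfolding r0_def by (simp add: mult_pos_neg)
  obtain d where d: "d > 0" "\<And>h. h > 0 \<Longrightarrow> h < d \<Longrightarrow> G r0 > G (r0 + h)"
    using DERIV_neg_dec_right[OF G_der Gd] by blast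
  define p where "p = r0 + min (d/2) (e/2)"
  have p: "p > r0" "p < r0 + e" "G p < G r0"
    using d e unfolding p_def by (auto intro!: d(2))
  define \<eta> where "\<eta> = G s0 - G p"
  have \<eta>: "\<eta> > 0" using p sr unfolding \<eta>_def by simp
  obtain dg where dg: "dg > 0" "\<And>t. \<bar>t - s0\<bar> < dg \<Longrightarrow> \<bar>b t - b s0\<bar> < b s0"
    using isCont_delta[OF b_cont b1pos[OF x0, folded s0_def]] by blast
  define \<delta>' where "\<delta>' = min (dg/2) ((r0 - s0)/4)"
  have \<delta>': "\<delta>' > 0" "\<delta>' < dg" "\<delta>' \<le> (r0 - s0)/4"
    using dg sr unfolding \<delta>'_def by (auto simp: min_def)
  have bpos: "b t > 0" if "s0 - \<delta>' \<le> t" "t \<le> s0 + \<delta>'" for t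
  proof -
    have "\<bar>t - s0\<bar> < dg" using that \<delta>' by linarith
    then show ?thesis using dg(2)[of t] by linarith
  qed
  define mq where "mq = min (e/2) ((r0 - s0)/4)"
  have mm: "mq \<le> e/2" "mq \<le> (r0 - s0)/4" "mq > 0"
    unfolding mq_def by (rule min.cobounded1, rule min.cobounded2) (use e sr in auto)
  define q where "q = r0 - mq"
  have q1: "s0 + \<delta>' < q" using sr \<delta>' mm unfolding q_def by (simp add: field_simps)
  have q2: "q < r0" using mm unfolding q_def by linarith
  have q3: "r0 - e < q" using e mm unfolding q_def by linarith
  note q = q1 q2 q3
  have cG: "continuous_on {s0 + \<delta>'..q} (\<lambda>t. G t - G s0)"
    using G_der by (intro continuous_at_imp_continuous_on continuous_intros ballI) (metis DERIV_isCont)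
  obtain tm where tm: "tm \<in> {s0 + \<delta>'..q}" "\<And>t. t \<in> {s0 + \<delta>'..q} \<Longrightarrow> G tm - G s0 \<le> G t - G s0"
    using continuous_attains_inf[OF compact_Icc _ cG] q(1) by auto
  define m0 where "m0 = G tm - G s0"
  have m0: "m0 > 0" unfolding m0_def using Gpos[OF x0, of tm] tm(1) q \<delta>' unfolding s0_def r0_def by auto
  have cGt: "isCont (\<lambda>x. G (t1 x)) x0"
    by (rule isCont_o2[OF t1_cont[OF x0]]) (metis DERIV_isCont G_der)
  obtain d2 where d2: "d2 > 0" "\<And>x. \<bar>x - x0\<bar> < d2 \<Longrightarrow> \<bar>t1 x - s0\<bar> < \<delta>'"
    using isCont_delta[OF t1_cont[OF x0] \<delta>'(1)] unfolding s0_def by blast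
  obtain d3 where d3: "d3 > 0" "\<And>x. \<bar>x - x0\<bar> < d3 \<Longrightarrow> \<bar>G (t1 x) - G s0\<bar> < min \<eta> m0"
    using isCont_delta[OF cGt, of "min \<eta> m0"] \<eta> m0 unfolding s0_def by auto
  define \<delta> where "\<delta> = min d0 (min d2 d3)"
  have "\<delta> > 0" using d0 d2 d3 unfolding \<delta>_def by auto
  moreover have "\<bar>t2 x - t2 x0\<bar> < e" if xd: "\<bar>x - x0\<bar> < \<delta>" for x
  proof -
    have xI: "x \<in> I" using d0(2) xd unfolding \<delta>_def by auto
    have t1x: "\<bar>t1 x - s0\<bar> < \<delta>'" using d2(2) xd unfolding \<delta>_def by auto
    have Gt1: "\<bar>G (t1 x) - G s0\<bar> < \<eta>" "\<bar>G (t1 x) - G s0\<bar> < m0"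
      using d3(2)[of x] xd unfolding \<delta>_def by auto
    have Zx: "t1 x < t2 x" "G (t2 x) = G (t1 x)" using z[OF xI] G_eq[OF xI] by auto
    have up: "t2 x < p"
    proof (rule ccontr)
      assume "\<not> t2 x < p"
      then have "p < t2 x \<or> p = t2 x" by auto
      then have "G p \<ge> G (t1 x)"
      proof
        assume "p < t2 x"
        moreover have "t1 x < p" using t1x \<delta>' p sr by auto
        ultimately show ?thesis using Gpos[OF xI, of p] by auto
      next
        assume "p = t2 x" then show ?thesis using Zx by simp
      qed
      then show False using Gt1(1) unfolding \<eta>_def by simp
    qed
    have lo: "q < t2 x"
    proof (rule ccontr)
      assume "\<not> q < t2 x"
      then have le: "t2 x \<le> q" by simp
      show False
      proof (cases "t2 x \<le> s0 + \<delta>'")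
        case True
        have "G (t1 x) < G (t2 x)"
          by (rule G_incr[of "s0 - \<delta>'" "s0 + \<delta>'"]) (use bpos t1x True Zx in auto)
        then show False using Zx by simp
      next
        case False
        then have "t2 x \<in> {s0 + \<delta>'..q}" using le by auto
        then have "m0 \<le> G (t2 x) - G s0" using tm(2) unfolding m0_def by blast
        then show False using Gt1(2) Zx by simp
      qed
    qed
    show ?thesis using up lo p q unfolding r0_def by auto
  qed
  ultimately show "\<exists>d>0. \<forall>x. \<bar>x - x0\<bar> < d \<longrightarrow> \<bar>t2 x - t2 x0\<bar> < e" by blast
qed

end

context setting begin

lemma t1_hext: assumes x0: "x0 \<in> I" shows "hext t1 x0"
proof -
  have Dnz: "exp (A (t1 x0)) * b (t1 x0) \<noteq> 0" using b1pos[OF x0] by simp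
  have ev: "\<forall>\<^sub>F x in nhds x0. F (t1 x) = - x"
    using eventually_nhds_in_open[OF I_open x0] by eventually_elim (rule F_t1)
  show ?thesis by (rule hext_inverse[OF F_hext hext_uminus t1_cont[OF x0] refl F_der Dnz ev])
qed

lemma t2_hext: assumes x0: "x0 \<in> I" shows "hext t2 x0"
proof -
  have Dnz: "exp (- A (t2 x0)) * b (t2 x0) \<noteq> 0" using b2neg[OF x0] by simp
  have ev: "\<forall>\<^sub>F x in nhds x0. G (t2 x) = G (t1 x)"
    using eventually_nhds_in_open[OF I_open x0] by eventually_elim (rule G_eq)
  have k: "hext (\<lambda>x. G (t1 x)) x0"
    by (rule hext_compose[OF G_hext t1_hext[OF x0] t1_cont[OF x0]])
  show ?thesis by (rule hext_inverse[OF G_hext k t2_cont[OF x0] refl G_der Dnz ev])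
qed

lemma t1_deriv: assumes x0: "x0 \<in> I" shows "\<exists>D. (t1 has_real_derivative D) (at x0) \<and> D < 0"
proof -
  obtain D where D: "(t1 has_real_derivative D) (at x0)" using hext_deriv[OF t1_hext[OF x0]] by blast
  have c: "exp (A (t1 x0)) * b (t1 x0) > 0" using b1pos[OF x0] by simp
  have d1: "((\<lambda>x. F (t1 x)) has_real_derivative exp (A (t1 x0)) * b (t1 x0) * D) (at x0)"
    by (rule DERIV_chain2[OF F_der D])
  have d2: "((\<lambda>x. - x) has_real_derivative - 1) (at x0)"
    by (auto intro!: derivative_eq_intros)
  have ev: "\<forall>\<^sub>F x in nhds x0. F (t1 x) = - x"
    using eventually_nhds_in_open[OF I_open x0] by eventually_elim (rule F_t1)
  have eq: "exp (A (t1 x0)) * b (t1 x0) * D = - 1" by (rule deriv_ev_eq[OF d1 d2 ev])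
  have "D < 0"
  proof (rule ccontr)
    assume "\<not> D < 0"
    then have "exp (A (t1 x0)) * b (t1 x0) * D \<ge> 0" using c by simp
    then show False using eq by simp
  qed
  then show ?thesis using D by blast
qed

lemma t2_deriv: assumes x0: "x0 \<in> I" shows "\<exists>D. (t2 has_real_derivative D) (at x0) \<and> D > 0"
proof -
  obtain D1 where D1: "(t1 has_real_derivative D1) (at x0)" "D1 < 0" using t1_deriv[OF x0] by blast
  obtain D where D: "(t2 has_real_derivative D) (at x0)" using hext_deriv[OF t2_hext[OF x0]] by blast
  have c1: "exp (- A (t1 x0)) * b (t1 x0) > 0" using b1pos[OF x0] by simp
  have c2: "exp (- A (t2 x0)) * b (t2 x0) < 0" using b2neg[OF x0] by (simp add: mult_pos_neg)
  have d1: "((\<lambda>x. G (t2 x)) has_real_derivative exp (- A (t2 x0)) * b (t2 x0) * D) (at x0)"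
    by (rule DERIV_chain2[OF G_der D])
  have d2: "((\<lambda>x. G (t1 x)) has_real_derivative exp (- A (t1 x0)) * b (t1 x0) * D1) (at x0)"
    by (rule DERIV_chain2[OF G_der D1(1)])
  have ev: "\<forall>\<^sub>F x in nhds x0. G (t2 x) = G (t1 x)"
    using eventually_nhds_in_open[OF I_open x0] by eventually_elim (rule G_eq)
  have eq: "exp (- A (t2 x0)) * b (t2 x0) * D = exp (- A (t1 x0)) * b (t1 x0) * D1"
    by (rule deriv_ev_eq[OF d1 d2 ev])
  have neg: "exp (- A (t1 x0)) * b (t1 x0) * D1 < 0" using c1 D1(2) by (simp add: mult_pos_neg)
  have "D > 0"
  proof (rule ccontr)
    assume "\<not> D > 0"
    then have "exp (- A (t2 x0)) * b (t2 x0) * D \<ge> 0" using c2 by (simp add: mult_nonpos_nonpos)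
    then show False using eq neg by simp
  qed
  then show ?thesis using D by blast
qed

lemma t1_inj: "inj_on t1 I"
proof (rule inj_onI)
  fix x y assume xy: "x \<in> I" "y \<in> I" "t1 x = t1 y"
  have "- x = F (t1 x)" using F_t1[OF xy(1)] by simp
  also have "\<dots> = F (t1 y)" using xy(3) by (rule arg_cong)
  also have "\<dots> = - y" using F_t1[OF xy(2)] .
  finally show "x = y" by simp
qed

lemma t2_mono: assumes "x \<in> I" "y \<in> I" "x < y" shows "t2 x < t2 y"
proof (rule DERIV_pos_imp_increasing[OF assms(3)])
  fix t assume "x \<le> t" "t \<le> y"
  moreover have "\<forall>a\<in>I. \<forall>b\<in>I. \<forall>t. a \<le> t \<and> t \<le> b \<longrightarrow> t \<in> I"
    using I_interval unfolding is_interval_1 .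
  ultimately have "t \<in> I" using assms(1,2) by blast
  then show "\<exists>D. (t2 has_real_derivative D) (at t) \<and> D > 0" by (rule t2_deriv)
qed

lemma t2_inj: "inj_on t2 I"
proof (rule inj_onI)
  fix x y assume xy: "x \<in> I" "y \<in> I" "t2 x = t2 y"
  show "x = y"
  proof (rule linorder_cases[of x y])
    assume "x < y" then have "t2 x < t2 y" by (rule t2_mono[OF xy(1,2)])
    then show ?thesis using xy(3) by (simp only: less_irrefl)
  next
    assume "y < x" then have "t2 y < t2 x" by (rule t2_mono[OF xy(2,1)])
    then show ?thesis using xy(3) by (simp only: less_irrefl)
  qed
qed

lemma part1:
  "real_analytic_on t1 I \<and> real_analytic_on t2 I \<and> inj_on t1 I \<and> inj_on t2 I \<and>
   real_analytic_on (inv_into I t1) (t1 ` I) \<and> real_analytic_on (inv_into I t2) (t2 ` I)"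
proof (intro conjI)
  show "real_analytic_on t1 I" by (rule hext_real_analytic_on) (rule t1_hext)
  show "real_analytic_on t2 I" by (rule hext_real_analytic_on) (rule t2_hext)
  show "inj_on t1 I" by (rule t1_inj)
  show "inj_on t2 I" by (rule t2_inj)
  show "real_analytic_on (inv_into I t1) (t1 ` I)"
  proof (rule hext_real_analytic_on)
    fix y assume "y \<in> t1 ` I"
    show "hext (inv_into I t1) y"
    proof (rule inv_hext[OF I_open t1_inj t1_hext _ \<open>y \<in> t1 ` I\<close>])
      fix x assume "x \<in> I"
      then obtain D where "(t1 has_real_derivative D) (at x)" "D < 0" using t1_deriv by blast
      then show "\<exists>D. (t1 has_real_derivative D) (at x) \<and> D \<noteq> 0" by (intro exI[of _ D]) simp
    qed
  qed
  show "real_analytic_on (inv_into I t2) (t2 ` I)"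
  proof (rule hext_real_analytic_on)
    fix y assume "y \<in> t2 ` I"
    show "hext (inv_into I t2) y"
    proof (rule inv_hext[OF I_open t2_inj t2_hext _ \<open>y \<in> t2 ` I\<close>])
      fix x assume "x \<in> I"
      then obtain D where "(t2 has_real_derivative D) (at x)" "D > 0" using t2_deriv by blast
      then show "\<exists>D. (t2 has_real_derivative D) (at x) \<and> D \<noteq> 0" by (intro exI[of _ D]) simp
    qed
  qed
qed

lemma part2:
  "\<forall>x\<in>I. b (t1 x) > 0 \<and> (\<exists>d. (t1 has_real_derivative d) (at x) \<and> d < 0) \<and>
                b (t2 x) < 0 \<and> (\<exists>d. (t2 has_real_derivative d) (at x) \<and> d > 0)"
proof
  fix x assume x: "x \<in> I"
  show "b (t1 x) > 0 \<and> (\<exists>d. (t1 has_real_derivative d) (at x) \<and> d < 0) \<and>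
                b (t2 x) < 0 \<and> (\<exists>d. (t2 has_real_derivative d) (at x) \<and> d > 0)"
    using b1pos[OF x] t1_deriv[OF x] b2neg[OF x] t2_deriv[OF x] by (intro conjI)
qed

end


lemma gronwall_zero:
  fixes w w' :: "real \<Rightarrow> real"
  assumes d: "\<And>t. (w has_real_derivative w' t) (at t)"
    and bd: "\<And>t. \<bar>w' t\<bar> \<le> M * \<bar>w t\<bar>" and w0: "w 0 = 0"
  shows "w t = 0"
proof -
  have key: "w s * w' s \<le> M * (w s)\<^sup>2" for s
  proof -
    have "w s * w' s \<le> \<bar>w s\<bar> * \<bar>w' s\<bar>" by (metis abs_ge_self abs_mult)
    also have "\<dots> \<le> \<bar>w s\<bar> * (M * \<bar>w s\<bar>)" by (rule mult_left_mono[OF bd abs_ge_zero])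
    also have "\<dots> = M * (w s)\<^sup>2" by (simp add: power2_eq_square algebra_simps)
    finally show ?thesis .
  qed
  have key2: "- (w s * w' s) \<le> M * (w s)\<^sup>2" for s
  proof -
    have "- (w s * w' s) \<le> \<bar>w s\<bar> * \<bar>w' s\<bar>" by (metis abs_ge_minus_self abs_mult)
    also have "\<dots> \<le> \<bar>w s\<bar> * (M * \<bar>w s\<bar>)" by (rule mult_left_mono[OF bd abs_ge_zero])
    also have "\<dots> = M * (w s)\<^sup>2" by (simp add: power2_eq_square algebra_simps)
    finally show ?thesis .
  qed
  define \<phi> where "\<phi> s = (w s)\<^sup>2 * exp (- 2 * M * s)" for s
  define \<psi> where "\<psi> s = (w s)\<^sup>2 * exp (2 * M * s)" for s
  have d\<phi>: "(\<phi> has_real_derivative (2 * (w s * w' s) - 2 * M * (w s)\<^sup>2) * exp (- 2 * M * s)) (at s)" for s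
    unfolding \<phi>_def by (auto intro!: derivative_eq_intros d simp: algebra_simps power2_eq_square)
  have d\<psi>: "(\<psi> has_real_derivative (2 * (w s * w' s) + 2 * M * (w s)\<^sup>2) * exp (2 * M * s)) (at s)" for s
    unfolding \<psi>_def by (auto intro!: derivative_eq_intros d simp: algebra_simps power2_eq_square)
  show ?thesis
  proof (cases "0 \<le> t")
    case True
    have "\<phi> t \<le> \<phi> 0"
    proof (rule DERIV_nonpos_imp_nonincreasing[OF True])
      fix s
      have "(2 * (w s * w' s) - 2 * M * (w s)\<^sup>2) * exp (- 2 * M * s) \<le> 0"
        using key[of s] by (intro mult_nonpos_nonneg) auto
      then show "\<exists>y. (\<phi> has_real_derivative y) (at s) \<and> y \<le> 0" using d\<phi> by blast
    qed
    then have "(w t)\<^sup>2 * exp (- 2 * M * t) \<le> 0" using w0 unfolding \<phi>_def by simp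
    then have "(w t)\<^sup>2 \<le> 0" by (simp add: mult_le_0_iff)
    then show ?thesis by simp
  next
    case False
    then have le: "t \<le> 0" by simp
    have "\<psi> t \<le> \<psi> 0"
    proof (rule DERIV_nonneg_imp_nondecreasing[OF le])
      fix s
      have "(2 * (w s * w' s) + 2 * M * (w s)\<^sup>2) * exp (2 * M * s) \<ge> 0"
        using key2[of s] by (intro mult_nonneg_nonneg) auto
      then show "\<exists>y. (\<psi> has_real_derivative y) (at s) \<and> y \<ge> 0" using d\<psi> by blast
    qed
    then have "(w t)\<^sup>2 * exp (2 * M * t) \<le> 0" using w0 unfolding \<psi>_def by simp
    then have "(w t)\<^sup>2 \<le> 0" by (simp add: mult_le_0_iff)
    then show ?thesis by simp
  qed
qed

context setting begin

lemma intA: assumes "t \<le> T" shows "integral {t..T} a = A T - A t"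
proof -
  have "(a has_integral A T - A t) {t..T}"
  proof (rule fundamental_theorem_of_calculus[OF assms])
    fix s assume "s \<in> {t..T}"
    show "(A has_vector_derivative a s) (at s within {t..T})"
      using A_der[of s] by (simp add: has_real_derivative_iff_has_vector_derivative has_vector_derivative_at_within)
  qed
  then show ?thesis by (rule integral_unique)
qed

lemma intnegA: assumes "t \<le> T" shows "integral {t..T} (\<lambda>s. - a s) = A t - A T"
proof -
  have "((\<lambda>s. - a s) has_integral (- A T) - (- A t)) {t..T}"
  proof (rule fundamental_theorem_of_calculus[OF assms])
    fix s assume "s \<in> {t..T}"
    have "((\<lambda>s. - A s) has_real_derivative - a s) (at s)" by (rule DERIV_minus[OF A_der])
    then show "((\<lambda>s. - A s) has_vector_derivative - a s) (at s within {t..T})"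
      by (simp add: has_real_derivative_iff_has_vector_derivative has_vector_derivative_at_within)
  qed
  then have "integral {t..T} (\<lambda>s. - a s) = (- A T) - (- A t)" by (rule integral_unique)
  then show ?thesis by simp
qed

lemma part3: "\<forall>x\<in>I. integral {t1 x..t2 x} (\<lambda>t. b t * exp (integral {t..t2 x} a)) = 0"
proof
  fix x assume x: "x \<in> I"
  define T where "T = t2 x"
  have le: "t1 x \<le> T" using z[OF x] unfolding T_def by simp
  have "integral {t1 x..T} (\<lambda>t. b t * exp (integral {t..T} a)) = integral {t1 x..T} (\<lambda>t. exp (A T) * (exp (- A t) * b t))"
  proof (rule integral_cong)
    fix t assume "t \<in> {t1 x..T}"
    then have eq: "integral {t..T} a = A T - A t" by (intro intA) auto
    show "b t * exp (integral {t..T} a) = exp (A T) * (exp (- A t) * b t)"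
      unfolding eq by (simp add: exp_diff exp_minus field_simps)
  qed
  also have "\<dots> = exp (A T) * G T - exp (A T) * G (t1 x)"
  proof -
    have "((\<lambda>t. exp (A T) * (exp (- A t) * b t)) has_integral exp (A T) * G T - exp (A T) * G (t1 x)) {t1 x..T}"
    proof (rule fundamental_theorem_of_calculus[OF le])
      fix s assume "s \<in> {t1 x..T}"
      have "((\<lambda>s. exp (A T) * G s) has_real_derivative exp (A T) * (exp (- A s) * b s)) (at s)"
        by (rule DERIV_cmult[OF G_der])
      then show "((\<lambda>s. exp (A T) * G s) has_vector_derivative exp (A T) * (exp (- A s) * b s)) (at s within {t1 x..T})"
        by (simp add: has_real_derivative_iff_has_vector_derivative has_vector_derivative_at_within)
    qed
    then show ?thesis by (rule integral_unique)
  qed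
  also have "\<dots> = 0" using G_eq[OF x] unfolding T_def by simp
  finally show "integral {t1 x..t2 x} (\<lambda>t. b t * exp (integral {t..t2 x} a)) = 0" unfolding T_def .
qed

lemma A_per: "A (t + 2 * pi) = A t + A (2 * pi)"
proof -
  have d: "((\<lambda>t. A (t + 2 * pi) - A t - A (2 * pi)) has_real_derivative 0) (at t)" for t
  proof -
    have "((\<lambda>t. A (t + 2 * pi)) has_real_derivative a (t + 2 * pi)) (at t)"
      using A_der[of "t + 2 * pi"] by (simp add: DERIV_shift)
    then have "((\<lambda>t. A (t + 2 * pi) - A t - A (2 * pi)) has_real_derivative a (t + 2 * pi) - a t - 0) (at t)"
      by (intro DERIV_diff A_der DERIV_const)
    then show ?thesis using a_per by simp
  qed
  have "A (t + 2 * pi) - A t - A (2 * pi) = A (0 + 2 * pi) - A 0 - A (2 * pi)"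
    using DERIV_isconst_all[of "\<lambda>t. A (t + 2 * pi) - A t - A (2 * pi)" t 0] d by blast
  then show ?thesis using A0 by simp
qed

lemma F_per: "F (t + 2 * pi) = F (2 * pi) + exp (A (2 * pi)) * F t"
proof -
  have d: "((\<lambda>t. F (t + 2 * pi) - F (2 * pi) - exp (A (2 * pi)) * F t) has_real_derivative 0) (at t)" for t
  proof -
    have "((\<lambda>t. F (t + 2 * pi)) has_real_derivative exp (A (t + 2 * pi)) * b (t + 2 * pi)) (at t)"
      using F_der[of "t + 2 * pi"] by (simp add: DERIV_shift)
    then have "((\<lambda>t. F (t + 2 * pi) - F (2 * pi) - exp (A (2 * pi)) * F t) has_real_derivative
        exp (A (t + 2 * pi)) * b (t + 2 * pi) - 0 - exp (A (2 * pi)) * (exp (A t) * b t)) (at t)"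
      by (intro DERIV_diff DERIV_cmult F_der DERIV_const)
    moreover have "exp (A (t + 2 * pi)) * b (t + 2 * pi) - 0 - exp (A (2 * pi)) * (exp (A t) * b t) = 0"
      using A_per[of t] b_per[of t] by (simp add: exp_add)
    ultimately show ?thesis by simp
  qed
  have "F (t + 2 * pi) - F (2 * pi) - exp (A (2 * pi)) * F t = F (0 + 2 * pi) - F (2 * pi) - exp (A (2 * pi)) * F 0"
    using DERIV_isconst_all[of "\<lambda>t. F (t + 2 * pi) - F (2 * pi) - exp (A (2 * pi)) * F t" t 0] d by blast
  then show ?thesis using F0 by simp
qed

lemma int4: assumes x: "x \<in> I"
  shows "integral {t2 x..t1 x + 2 * pi} (\<lambda>t. b t * exp (integral {t..t1 x + 2 * pi} (\<lambda>s. - a s)))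
     = exp (- A (t1 x + 2 * pi)) * (F (t1 x + 2 * pi) - F (t2 x))"
proof -
  define T where "T = t1 x + 2 * pi"
  have le: "t2 x \<le> T" using z[OF x] unfolding T_def by simp
  have "integral {t2 x..T} (\<lambda>t. b t * exp (integral {t..T} (\<lambda>s. - a s))) = integral {t2 x..T} (\<lambda>t. exp (- A T) * (exp (A t) * b t))"
  proof (rule integral_cong)
    fix t assume "t \<in> {t2 x..T}"
    then have eq: "integral {t..T} (\<lambda>s. - a s) = A t - A T" by (intro intnegA) auto
    show "b t * exp (integral {t..T} (\<lambda>s. - a s)) = exp (- A T) * (exp (A t) * b t)"
      unfolding eq by (simp add: exp_diff exp_minus field_simps)
  qed
  also have "\<dots> = exp (- A T) * F T - exp (- A T) * F (t2 x)"
  proof -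
    have "((\<lambda>t. exp (- A T) * (exp (A t) * b t)) has_integral exp (- A T) * F T - exp (- A T) * F (t2 x)) {t2 x..T}"
    proof (rule fundamental_theorem_of_calculus[OF le])
      fix s assume "s \<in> {t2 x..T}"
      have "((\<lambda>s. exp (- A T) * F s) has_real_derivative exp (- A T) * (exp (A s) * b s)) (at s)"
        by (rule DERIV_cmult[OF F_der])
      then show "((\<lambda>s. exp (- A T) * F s) has_vector_derivative exp (- A T) * (exp (A s) * b s)) (at s within {t2 x..T})"
        by (simp add: has_real_derivative_iff_has_vector_derivative has_vector_derivative_at_within)
    qed
    then show ?thesis by (rule integral_unique)
  qed
  finally show ?thesis unfolding T_def by (simp add: right_diff_distrib)
qed

lemma u_shift_deriv: "((\<lambda>s. u (s + 2 * pi) x) has_real_derivative a t * \<bar>u (t + 2 * pi) x\<bar> + b t) (at t)"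
  using u_ode[where t="t + 2 * pi" and x=x] a_per[of t] b_per[of t] by (simp add: DERIV_shift)

lemma periodic_iff: "(\<forall>t. u (t + 2 * pi) x = u t x) \<longleftrightarrow> u (2 * pi) x = x"
proof
  assume "\<forall>t. u (t + 2 * pi) x = u t x"
  then show "u (2 * pi) x = x" using u_init[of x] by (metis add_0)
next
  assume h: "u (2 * pi) x = x"
  show "\<forall>t. u (t + 2 * pi) x = u t x"
  proof
    fix t
    define w where "w s = u (s + 2 * pi) x - u s x" for s
    define w' where "w' s = a s * \<bar>u (s + 2 * pi) x\<bar> + b s - (a s * \<bar>u s x\<bar> + b s)" for s
    have d: "(w has_real_derivative w' s) (at s)" for s
      unfolding w_def w'_def by (rule DERIV_diff[OF u_shift_deriv u_ode])
    have bd: "\<bar>w' s\<bar> \<le> M * \<bar>w s\<bar>" for s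
    proof -
      have "\<bar>w' s\<bar> = \<bar>a s\<bar> * \<bar>\<bar>u (s + 2 * pi) x\<bar> - \<bar>u s x\<bar>\<bar>"
        unfolding w'_def by (simp add: abs_mult[symmetric] right_diff_distrib)
      also have "\<dots> \<le> M * \<bar>w s\<bar>"
        unfolding w_def by (rule mult_mono[OF a_bd abs_triangle_ineq3]) (use a_bd[of s] in auto)
      finally show ?thesis .
    qed
    have "w 0 = 0" unfolding w_def using h u_init[of x] by simp
    then have "w t = 0" using gronwall_zero[OF d bd] by blast
    then show "u (t + 2 * pi) x = u t x" unfolding w_def by simp
  qed
qed

lemma part4: "\<forall>x\<in>I. (\<forall>t. u (t + 2 * pi) x = u t x) \<longleftrightarrow>
                 integral {t2 x..t1 x + 2 * pi}
                   (\<lambda>t. b t * exp (integral {t..t1 x + 2 * pi} (\<lambda>s. - a s))) = 0"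
proof
  fix x assume x: "x \<in> I"
  have e1: "F (t1 x + 2 * pi) = F (2 * pi) - exp (A (2 * pi)) * x"
    using F_per[of "t1 x"] F_t1[OF x] by simp
  have e2: "F (t2 x) = F (2 * pi) - exp (A (2 * pi)) * u (2 * pi) x"
    using F_2pi[OF x] by simp
  have "integral {t2 x..t1 x + 2 * pi} (\<lambda>t. b t * exp (integral {t..t1 x + 2 * pi} (\<lambda>s. - a s))) = 0
     \<longleftrightarrow> F (t1 x + 2 * pi) = F (t2 x)"
    unfolding int4[OF x] by simp
  also have "\<dots> \<longleftrightarrow> u (2 * pi) x = x"
    unfolding e1 e2 by auto
  also have "\<dots> \<longleftrightarrow> (\<forall>t. u (t + 2 * pi) x = u t x)"
    by (rule periodic_iff[symmetric])
  finally show "(\<forall>t. u (t + 2 * pi) x = u t x) \<longleftrightarrow>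
                 integral {t2 x..t1 x + 2 * pi}
                   (\<lambda>t. b t * exp (integral {t..t1 x + 2 * pi} (\<lambda>s. - a s))) = 0" by simp
qed

end


lemma hext_UNIV:
  assumes "P holomorphic_on UNIV" "\<And>t. P (complex_of_real t) = complex_of_real (R t)"
  shows "hext R t"
  by (rule hextI[OF open_UNIV UNIV_I assms(1)]) (simp add: assms(2))

theorem proposition3p4:
  fixes a b :: "real \<Rightarrow> real"
    and u :: "real \<Rightarrow> real \<Rightarrow> real"
    and I :: "real set"
    and t1 t2 :: "real \<Rightarrow> real"
  assumes a_trig: "trig_poly a"
    and b_trig: "trig_poly b"
    and b_simple: "\<And>t. b t = 0 \<Longrightarrow> deriv b t \<noteq> 0"
    and u_ode: "\<And>t x. ((\<lambda>s. u s x) has_real_derivative (a t * \<bar>u t x\<bar> + b t)) (at t)"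
    and u_init: "\<And>x. u 0 x = x"
    and I_open: "open I" and I_interval: "is_interval I" and I_ne: "I \<noteq> {}"
    and I_neg: "I \<subseteq> {..<0}"
    and zeros: "\<And>x. x \<in> I \<Longrightarrow> 0 < t1 x \<and> t1 x < t2 x \<and> t2 x < 2 * pi \<and>
                 {t \<in> {0<..<2 * pi}. u t x = 0} = {t1 x, t2 x}"
    and simple: "\<And>x t. x \<in> I \<Longrightarrow> t \<in> {0<..<2 * pi} \<Longrightarrow> u t x = 0 \<Longrightarrow>
                 deriv (\<lambda>s. u s x) t \<noteq> 0"
  shows "(real_analytic_on t1 I \<and> real_analytic_on t2 I \<and>
         inj_on t1 I \<and> inj_on t2 I \<and>
         real_analytic_on (inv_into I t1) (t1 ` I) \<and>
         real_analytic_on (inv_into I t2) (t2 ` I))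
     \<and> (\<forall>x\<in>I. b (t1 x) > 0 \<and> (\<exists>d. (t1 has_real_derivative d) (at x) \<and> d < 0) \<and>
                b (t2 x) < 0 \<and> (\<exists>d. (t2 has_real_derivative d) (at x) \<and> d > 0))
     \<and> (\<forall>x\<in>I. integral {t1 x..t2 x}
                 (\<lambda>t. b t * exp (integral {t..t2 x} a)) = 0)
     \<and> (\<forall>x\<in>I. (\<forall>t. u (t + 2 * pi) x = u t x) \<longleftrightarrow>
                 integral {t2 x..t1 x + 2 * pi}
                   (\<lambda>t. b t * exp (integral {t..t1 x + 2 * pi} (\<lambda>s. - a s))) = 0)"
proof -
  obtain ac where ac: "ac holomorphic_on UNIV" "\<And>t. ac (complex_of_real t) = complex_of_real (a t)"
    "\<And>t. a (t + 2 * pi) = a t" "\<exists>M. \<forall>t. \<bar>a t\<bar> \<le> M"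
    using trig_ext[OF a_trig] by blast
  obtain bc where bc: "bc holomorphic_on UNIV" "\<And>t. bc (complex_of_real t) = complex_of_real (b t)"
    "\<And>t. b (t + 2 * pi) = b t" "\<exists>M. \<forall>t. \<bar>b t\<bar> \<le> M"
    using trig_ext[OF b_trig] by blast
  obtain M where M: "\<And>t. \<bar>a t\<bar> \<le> M" using ac(4) by blast
  obtain PA A where PA: "PA holomorphic_on UNIV" "\<And>z. (PA has_field_derivative ac z) (at z)"
    "\<And>t. PA (complex_of_real t) = complex_of_real (A t)"
    "A 0 = 0" "\<And>t. (A has_real_derivative a t) (at t)"
    using real_primitive[OF ac(1,2)] by blast
  have holF: "(\<lambda>z. exp (PA z) * bc z) holomorphic_on UNIV"
    using PA(1) bc(1) by (intro holomorphic_intros)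
  have reF: "exp (PA (complex_of_real t)) * bc (complex_of_real t) = complex_of_real (exp (A t) * b t)" for t
    using PA(3) bc(2) by (simp add: exp_of_real)
  obtain PF F where PF: "PF holomorphic_on UNIV" "\<And>z. (PF has_field_derivative exp (PA z) * bc z) (at z)"
    "\<And>t. PF (complex_of_real t) = complex_of_real (F t)"
    "F 0 = 0" "\<And>t. (F has_real_derivative exp (A t) * b t) (at t)"
    using real_primitive[of "\<lambda>z. exp (PA z) * bc z" "\<lambda>t. exp (A t) * b t", OF holF reF] by blast
  have holG: "(\<lambda>z. exp (- PA z) * bc z) holomorphic_on UNIV"
    using PA(1) bc(1) by (intro holomorphic_intros)
  have reG: "exp (- PA (complex_of_real t)) * bc (complex_of_real t) = complex_of_real (exp (- A t) * b t)" for t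
  proof -
    have "- PA (complex_of_real t) = complex_of_real (- A t)" using PA(3) by simp
    then show ?thesis using bc(2) by (simp only: exp_of_real of_real_mult)
  qed
  obtain PG G where PG: "PG holomorphic_on UNIV" "\<And>z. (PG has_field_derivative exp (- PA z) * bc z) (at z)"
    "\<And>t. PG (complex_of_real t) = complex_of_real (G t)"
    "G 0 = 0" "\<And>t. (G has_real_derivative exp (- A t) * b t) (at t)"
    using real_primitive[of "\<lambda>z. exp (- PA z) * bc z" "\<lambda>t. exp (- A t) * b t", OF holG reG] by blast
  have ca: "\<And>t. isCont a t" using trig_cont[OF a_trig] .
  have cb: "\<And>t. isCont b t" using trig_cont[OF b_trig] .
  have hF: "\<And>t. hext F t" by (rule hext_UNIV[OF PF(1,3)])
  have hG: "\<And>t. hext G t" by (rule hext_UNIV[OF PG(1,3)])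
  interpret S: setting a b u I t1 t2 A F G M
    by (rule setting.intro[OF u_ode u_init I_open I_interval I_neg zeros simple ca cb ac(3) bc(3) M
        PA(5) PA(4) PF(5) PF(4) PG(5) hF hG])
  show ?thesis by (rule conjI[OF S.part1 conjI[OF S.part2 conjI[OF S.part3 S.part4]]])
qed


end
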